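(* Let $n\ge1$, $\mathbf y\in\mathbb R^n$, and let $(T_1,\dots,T_m)$ be a partition of $\{1,\dots,n\}$ into sets of consecutive integers, i.e. each $T_j=\{s_j,s_j+1,\dots,t_j\}$ for some $s_j\le t_j$. Then $$k\big(\Pi_{\mathcal S_n^\uparrow}(\mathbf y)\big)\le\sum_{j=1}^m k\big(\Pi_{\mathcal S^\uparrow_{|T_j|}}(\mathbf y_{T_j})\big).$$
   Context: $\mathcal S_m^\uparrow=\{\mathbf u\in\mathbb R^m:u_1\le\dots\le u_m\}$ ($\mathcal S_1^\uparrow=\mathbb R$); $\Pi_K$ is the Euclidean projection onto $K$. For $\mathbf v\in\mathbb R^n$ and $T=\{t_1<\dots<t_{|T|}\}\subseteq\{1,\dots,n\}$, $\mathbf v_T=(v_{t_1},\dots,v_{t_{|T|}})^T\in\mathbb R^{|T|}$. $k(\mathbf u)$ is the number of distinct coordinates of $\mathbf u$. *)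

theory Defs
  imports Complex_Main
begin

text \<open>Vectors in R^m are represented as real lists of length m; coordinate i
 (1-based) of v is v ! (i - 1).\<close>

definition sqdist :: "real list \<Rightarrow> real list \<Rightarrow> real" where
  "sqdist u v = (\<Sum>(a, b) \<leftarrow> zip u v. (a - b)^2)"

definition mono_cone :: "nat \<Rightarrow> real list set" where
  "mono_cone m = {u. length u = m \<and> sorted u}"

definition proj :: "real list set \<Rightarrow> real list \<Rightarrow> real list" where
  "proj K y = (THE u. u \<in> K \<and> (\<forall>v\<in>K. sqdist u y \<le> sqdist v y))"

definition subvec :: "real list \<Rightarrow> nat set \<Rightarrow> real list" where
  "subvec v T = map (\<lambda>i. v ! (i - 1)) (sorted_list_of_set T)"

definition kdist :: "real list \<Rightarrow> nat" where
  "kdist u = card (set u)"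

end

theory Submission imports Defs "HOL-Analysis.Analysis" begin

lemma sqdist_nth:
  assumes "length u = k" "length y = k"
  shows "sqdist u y = (\<Sum>i<k. (u!i - y!i)^2)"
proof -
  have "map (\<lambda>(a, b). (a - b)^2) (zip u y) = map (\<lambda>i. (u!i - y!i)^2) [0..<k]"
    by (rule nth_equalityI) (use assms in auto)
  then show ?thesis unfolding sqdist_def
    by (simp add: interv_sum_list_conv_sum_set_nat atLeast0LessThan)
qed

lemma sqdist_expand:
  assumes "length v = k" "length c = k" "length y = k"
  shows "sqdist v y = sqdist c y + 2 * (\<Sum>i<k. (c!i - y!i) * (v!i - c!i)) + (\<Sum>i<k. (v!i - c!i)^2)"
proof -
  have "(\<Sum>i<k. (v!i - y!i)^2) = (\<Sum>i<k. (c!i - y!i)^2 + 2 * ((c!i - y!i) * (v!i - c!i)) + (v!i - c!i)^2)"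
    by (rule sum.cong) (auto simp: power2_eq_square algebra_simps)
  then show ?thesis using assms
    by (simp add: sqdist_nth sum.distrib sum_distrib_left)
qed

definition seg :: "real list \<Rightarrow> real list \<Rightarrow> real \<Rightarrow> real list" where
  "seg u v t = map (\<lambda>i. u!i + t * (v!i - u!i)) [0..<length u]"

lemma VI_nec:
  assumes len: "length u = k" "length v = k" "length y = k"
    and opt: "\<And>t. 0 < t \<Longrightarrow> t \<le> 1 \<Longrightarrow> sqdist u y \<le> sqdist (seg u v t) y"
  shows "(\<Sum>i<k. (u!i - y!i) * (v!i - u!i)) \<ge> 0"
proof (rule ccontr)
  define A where "A = (\<Sum>i<k. (u!i - y!i) * (v!i - u!i))"
  define B where "B = (\<Sum>i<k. (v!i - u!i)^2)"
  assume "\<not> ?thesis"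
  hence A: "A < 0" by (simp add: A_def)
  have B0: "B \<ge> 0" unfolding B_def by (simp add: sum_nonneg)
  have key: "2 * A + t * B \<ge> 0" if "0 < t" "t \<le> 1" for t
  proof -
    have ls: "length (seg u v t) = k" using len by (simp add: seg_def)
    have "sqdist (seg u v t) y = sqdist u y + 2 * (\<Sum>i<k. (u!i - y!i) * ((seg u v t)!i - u!i)) + (\<Sum>i<k. ((seg u v t)!i - u!i)^2)"
      using sqdist_expand[OF ls len(1) len(3)] .
    also have "(\<Sum>i<k. (u!i - y!i) * ((seg u v t)!i - u!i)) = t * A"
      unfolding A_def sum_distrib_left by (rule sum.cong) (use len in \<open>auto simp: seg_def\<close>)
    also have "(\<Sum>i<k. ((seg u v t)!i - u!i)^2) = t^2 * B"
      unfolding B_def sum_distrib_left by (rule sum.cong) (use len in \<open>auto simp: seg_def power_mult_distrib\<close>)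
    finally have "0 \<le> 2 * (t * A) + t^2 * B" using opt[OF that] by simp
    also have "\<dots> = t * (2 * A + t * B)" by (simp add: power2_eq_square algebra_simps)
    finally show ?thesis using that by (simp add: zero_le_mult_iff)
  qed
  have Bp: "B > 0" using key[of 1] A by linarith
  define t where "t = min 1 (- A / B)"
  have t0: "0 < t" "t \<le> 1" using A Bp by (auto simp: t_def divide_neg_pos)
  have "t * B \<le> - A" using Bp by (simp add: t_def min_def field_simps split: if_splits)
  with key[OF t0] A show False by linarith
qed


definition clip :: "real \<Rightarrow> real \<Rightarrow> real \<Rightarrow> real" where
  "clip a b x = max a (min x b)"

lemma clip_dist: "a \<le> z \<Longrightarrow> z \<le> b \<Longrightarrow> (clip a b x - z)^2 \<le> (x - z)^2"
proof -
  assume "a \<le> z" "z \<le> b"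
  hence "\<bar>clip a b x - z\<bar> \<le> \<bar>x - z\<bar>" unfolding clip_def by auto
  thus ?thesis by (simp add: abs_le_square_iff)
qed

lemma clip_mono: "a \<le> b \<Longrightarrow> x \<le> x' \<Longrightarrow> clip a b x \<le> clip a b x'"
  unfolding clip_def by auto

lemma clip_range: "a \<le> b \<Longrightarrow> a \<le> clip a b x \<and> clip a b x \<le> b"
  unfolding clip_def by auto

lemma exists_min:
  assumes "length y = k"
  shows "\<exists>u\<in>mono_cone k. \<forall>v\<in>mono_cone k. sqdist u y \<le> sqdist v y"
proof -
  define hi where "hi = (\<Sum>i<k. \<bar>y!i\<bar>)"
  define lo where "lo = - hi"
  have yb: "lo \<le> y!i \<and> y!i \<le> hi" if "i < k" for i
  proof -
    have "\<bar>y!i\<bar> \<le> hi" unfolding hi_def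
      by (rule member_le_sum) (use that in auto)
    thus ?thesis unfolding lo_def by linarith
  qed
  have lohi: "lo \<le> hi" unfolding lo_def hi_def by (simp add: sum_nonneg)
  define B where "B = (\<lambda>i::nat. if i < k then {lo..hi} else {0::real})"
  define M where "M = (\<Inter>p\<in>{p. fst p \<le> snd p \<and> snd p < k}. {f::nat\<Rightarrow>real. f (fst p) \<le> f (snd p)})"
  define KS where "KS = PiE UNIV B \<inter> M"
  have "compactin (product_topology (\<lambda>_. euclidean) UNIV) (PiE UNIV B)"
    unfolding compactin_PiE by (auto simp: B_def)
  hence "compact (PiE UNIV B)"
    by (simp add: euclidean_product_topology)
  moreover have "closed M" unfolding M_def
    by (intro closed_INT ballI closed_Collect_le) auto
  ultimately have cKS: "compact KS" unfolding KS_def by (rule compact_Int_closed)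
  have ne: "(\<lambda>_. 0) \<in> KS" using lohi
    unfolding KS_def M_def B_def lo_def by (auto simp: PiE_def extensional_def)
  define F where "F = (\<lambda>f::nat\<Rightarrow>real. \<Sum>i<k. (f i - y!i)^2)"
  have cF: "continuous_on KS F" unfolding F_def
    by (intro continuous_intros continuous_on_subset[OF continuous_on_product_coordinates]) auto
  obtain f0 where f0: "f0 \<in> KS" "\<And>g. g \<in> KS \<Longrightarrow> F f0 \<le> F g"
    using continuous_attains_inf[OF cKS _ cF] ne by blast
  define u where "u = map f0 [0..<k]"
  have "u \<in> mono_cone k"
    using f0(1) unfolding u_def mono_cone_def KS_def M_def
    by (auto simp: sorted_iff_nth_mono)
  moreover have "sqdist u y \<le> sqdist v y" if v: "v \<in> mono_cone k" for v
  proof -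
    define g where "g = (\<lambda>i. if i < k then clip lo hi (v!i) else 0)"
    have vl: "length v = k" "sorted v" using v by (auto simp: mono_cone_def)
    have "g \<in> KS"
      unfolding KS_def M_def B_def g_def using lohi clip_range[OF lohi] clip_mono[OF lohi] sorted_nth_mono[OF vl(2)] vl(1)
      by (auto simp: PiE_def extensional_def)
    hence "F f0 \<le> F g" by (rule f0(2))
    also have "F g \<le> sqdist v y"
      unfolding F_def sqdist_nth[OF vl(1) assms] g_def
      by (rule sum_mono) (use clip_dist yb in auto)
    finally show ?thesis
      unfolding F_def u_def using assms by (simp add: sqdist_nth)
  qed
  ultimately show ?thesis by blast
qed


lemma seg_nth: "i < length u \<Longrightarrow> seg u v t ! i = u!i + t * (v!i - u!i)"
  by (simp add: seg_def)

lemma seg_sorted: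
  assumes "length u = k" "length v = k" "sorted u" "sorted v" "0 \<le> t" "t \<le> 1"
  shows "sorted (seg u v t)" "length (seg u v t) = k"
proof -
  show "length (seg u v t) = k" using assms by (simp add: seg_def)
  show "sorted (seg u v t)"
  proof (subst sorted_iff_nth_mono, intro allI impI)
    fix i j assume ij: "i \<le> j" "j < length (seg u v t)"
    hence jk: "j < k" using assms by (simp add: seg_def)
    have "u!i \<le> u!j" "v!i \<le> v!j" using sorted_nth_mono[OF assms(3) ij(1)] sorted_nth_mono[OF assms(4) ij(1)] jk assms(1,2) by auto
    hence "(1 - t) * (u!i) + t * (v!i) \<le> (1 - t) * (u!j) + t * (v!j)"
      using assms by (intro add_mono mult_left_mono) auto
    thus "seg u v t ! i \<le> seg u v t ! j" using ij jk assms
      by (simp add: seg_nth algebra_simps)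
  qed
qed

lemma eq_from_sq:
  assumes "length v = k" "length c = k" "(\<Sum>i<k. (v!i - c!i)^2) \<le> (0::real)"
  shows "v = c"
proof -
  have "(\<Sum>i<k. (v!i - c!i)^2) = 0" using assms(3) by (simp add: antisym sum_nonneg)
  hence "\<forall>i\<in>{..<k}. (v!i - c!i)^2 = 0" by (subst (asm) sum_nonneg_eq_0_iff) auto
  thus ?thesis using assms by (intro nth_equalityI) auto
qed

lemma VI_cone:
  assumes "length y = k" "u \<in> mono_cone k" "\<forall>v\<in>mono_cone k. sqdist u y \<le> sqdist v y" "v \<in> mono_cone k"
  shows "(\<Sum>i<k. (u!i - y!i) * (v!i - u!i)) \<ge> 0"
proof (rule VI_nec[where k=k])
  show "length u = k" "length v = k" using assms by (auto simp: mono_cone_def)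
  show "length y = k" by fact
  fix t :: real assume t: "0 < t" "t \<le> 1"
  have "seg u v t \<in> mono_cone k" using assms t seg_sorted[of u k v t]
    by (auto simp: mono_cone_def)
  thus "sqdist u y \<le> sqdist (seg u v t) y" using assms(3) by blast
qed

lemma proj_char:
  assumes "length y = k"
  shows "proj (mono_cone k) y \<in> mono_cone k \<and> (\<forall>v\<in>mono_cone k. sqdist (proj (mono_cone k) y) y \<le> sqdist v y)"
proof -
  obtain u where u: "u \<in> mono_cone k" "\<forall>v\<in>mono_cone k. sqdist u y \<le> sqdist v y"
    using exists_min[OF assms] by blast
  have uniq: "u' = u" if u': "u' \<in> mono_cone k" "\<forall>v\<in>mono_cone k. sqdist u' y \<le> sqdist v y" for u'
  proof -
    have A: "(\<Sum>i<k. (u!i - y!i) * (u'!i - u!i)) \<ge> 0" using VI_cone[OF assms u u'(1)] .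
    have l: "length u' = k" "length u = k" using u u' by (auto simp: mono_cone_def)
    have "sqdist u' y = sqdist u y + 2 * (\<Sum>i<k. (u!i - y!i) * (u'!i - u!i)) + (\<Sum>i<k. (u'!i - u!i)^2)"
      by (rule sqdist_expand) (use l assms in auto)
    moreover have "sqdist u' y \<le> sqdist u y" using u'(2) u(1) by auto
    ultimately have "(\<Sum>i<k. (u'!i - u!i)^2) \<le> 0" using A by linarith
    thus ?thesis using eq_from_sq l by blast
  qed
  have "proj (mono_cone k) y = u" unfolding proj_def
    apply (rule the_equality)
    using u apply blast
    using uniq by blast
  thus ?thesis using u by simp
qed

lemma clip_diff_mono: "a \<le> b \<Longrightarrow> x \<le> x' \<Longrightarrow> x - clip a b x \<le> x' - clip a b x'"
  unfolding clip_def by auto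

lemma clip_prod: "a \<le> b \<Longrightarrow> a \<le> v \<Longrightarrow> v \<le> b \<Longrightarrow> (clip a b x - x) * (v - clip a b x) \<ge> 0"
proof -
  assume h: "a \<le> b" "a \<le> v" "v \<le> b"
  consider "x < a" | "x > b" | "a \<le> x" "x \<le> b" by linarith
  thus ?thesis
  proof cases
    case 1
    hence "clip a b x = a" using h unfolding clip_def by auto
    thus ?thesis using 1 h by (simp add: mult_nonneg_nonneg)
  next
    case 2
    hence "clip a b x = b" using h unfolding clip_def by auto
    thus ?thesis using 2 h by (simp add: mult_nonpos_nonpos)
  next
    case 3
    hence "clip a b x = x" unfolding clip_def by auto
    thus ?thesis by simp
  qed
qed

lemma block_clip:
  assumes lz: "length z = k" and w: "w \<in> mono_cone k"
    and wopt: "\<forall>v\<in>mono_cone k. sqdist w z \<le> sqdist v z" and ab: "a \<le> b"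
    and ut: "length ut = k" "sorted ut" "set ut \<subseteq> {a..b}"
    and uopt: "\<And>v. length v = k \<Longrightarrow> sorted v \<Longrightarrow> set v \<subseteq> {a..b} \<Longrightarrow> sqdist ut z \<le> sqdist v z"
  shows "ut = map (clip a b) w"
proof -
  define c where "c = map (clip a b) w"
  have wl: "length w = k" "sorted w" using w by (auto simp: mono_cone_def)
  have cl: "length c = k" using wl by (simp add: c_def)
  have cs: "sorted c" unfolding c_def sorted_map using clip_mono[OF ab]
    by (auto intro: sorted_wrt_mono_rel[OF _ wl(2)])
  have cb: "set c \<subseteq> {a..b}" unfolding c_def using clip_range[OF ab] by auto
  have utb: "a \<le> ut!i \<and> ut!i \<le> b" if "i < k" for i
  proof -
    have "ut!i \<in> set ut" using ut(1) that by simp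
    thus ?thesis using ut(3) by auto
  qed
  define q where "q = map (\<lambda>i. ut!i + (w!i - c!i)) [0..<k]"
  have q: "q \<in> mono_cone k"
    unfolding mono_cone_def
  proof (safe)
    show "length q = k" by (simp add: q_def)
    show "sorted q"
    proof (subst sorted_iff_nth_mono, intro allI impI)
      fix i j assume ij: "i \<le> j" "j < length q"
      hence jk: "j < k" by (simp add: q_def)
      have "ut!i \<le> ut!j" using sorted_nth_mono ut ij jk by auto
      moreover have "w!i \<le> w!j" using sorted_nth_mono wl ij jk by auto
      hence "w!i - c!i \<le> w!j - c!j" using ij jk wl unfolding c_def by (simp add: clip_diff_mono[OF ab])
      ultimately show "q!i \<le> q!j" using ij jk by (simp add: q_def)
    qed
  qed
  have A: "(\<Sum>i<k. (w!i - z!i) * (q!i - w!i)) \<ge> 0" by (rule VI_cone[OF lz w wopt q])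
  have "(\<Sum>i<k. (c!i - z!i) * (ut!i - c!i)) = (\<Sum>i<k. (c!i - w!i) * (ut!i - c!i)) + (\<Sum>i<k. (w!i - z!i) * (q!i - w!i))"
    unfolding sum.distrib[symmetric] by (rule sum.cong) (auto simp: q_def algebra_simps)
  moreover have "(\<Sum>i<k. (c!i - w!i) * (ut!i - c!i)) \<ge> 0"
    by (rule sum_nonneg) (use utb wl clip_prod[OF ab] in \<open>auto simp: c_def\<close>)
  ultimately have A2: "(\<Sum>i<k. (c!i - z!i) * (ut!i - c!i)) \<ge> 0" using A by linarith
  have "sqdist ut z = sqdist c z + 2 * (\<Sum>i<k. (c!i - z!i) * (ut!i - c!i)) + (\<Sum>i<k. (ut!i - c!i)^2)"
    by (rule sqdist_expand) (use ut cl lz in auto)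
  moreover have "sqdist ut z \<le> sqdist c z" using uopt cl cs cb by blast
  ultimately have "(\<Sum>i<k. (ut!i - c!i)^2) \<le> 0" using A2 by linarith
  thus ?thesis using eq_from_sq ut(1) cl c_def by blast
qed


lemma subvec_interval:
  assumes "1 \<le> s" "s \<le> t"
  shows "subvec v {s..t} = map (\<lambda>j. v!(s - 1 + j)) [0..<Suc t - s]"
proof -
  have "{s..t} = {s..<Suc t}" by auto
  hence eq: "sorted_list_of_set {s..t} = [s..<Suc t]" by (simp add: sorted_list_of_set_range del: upt_Suc)
  show ?thesis unfolding subvec_def eq
    by (intro nth_equalityI) (use assms in \<open>auto simp del: upt_Suc\<close>)
qed

lemma sum_split_block:
  fixes h :: "nat \<Rightarrow> real"
  assumes "p + L \<le> n"
  shows "(\<Sum>i<n. h i) = (\<Sum>i\<in>{..<n} - {p..<p+L}. h i) + (\<Sum>j<L. h (p + j))"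
proof -
  have "(\<Sum>i<n. h i) = (\<Sum>i\<in>{..<n} - {p..<p+L}. h i) + (\<Sum>i\<in>{p..<p+L}. h i)"
    by (rule sum.subset_diff) (use assms in auto)
  moreover have "(\<Sum>i\<in>{p..<p+L}. h i) = (\<Sum>j<L. h (p + j))"
    using sum.shift_bounds_nat_ivl[of h 0 p L] by (simp add: atLeast0LessThan add.commute)
  ultimately show ?thesis by simp
qed


lemma block_bound:
  assumes ly: "length y = n" and u: "u \<in> mono_cone n"
    and uopt: "\<forall>v\<in>mono_cone n. sqdist u y \<le> sqdist v y"
    and st: "1 \<le> s" "s \<le> t" "t \<le> n"
  shows "kdist (subvec u {s..t}) \<le> kdist (proj (mono_cone (card {s..t})) (subvec y {s..t}))"
proof -
  define L where "L = Suc t - s"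
  define p where "p = s - 1"
  have L1: "L \<ge> 1" and pL: "p + L = t" using st by (auto simp: L_def p_def)
  have lu: "length u = n" "sorted u" using u by (auto simp: mono_cone_def)
  define ut where "ut = subvec u {s..t}"
  define z where "z = subvec y {s..t}"
  have ut_def': "ut = map (\<lambda>j. u!(p + j)) [0..<L]"
    unfolding ut_def p_def L_def using subvec_interval[OF st(1,2)] by simp
  have z_def': "z = map (\<lambda>j. y!(p + j)) [0..<L]"
    unfolding z_def p_def L_def using subvec_interval[OF st(1,2)] by simp
  have lut: "length ut = L" and lz: "length z = L" by (simp_all add: ut_def' z_def')
  have utn: "ut!j = u!(p+j)" if "j < L" for j using that by (simp add: ut_def')
  have zn: "z!j = y!(p+j)" if "j < L" for j using that by (simp add: z_def')
  have sut: "sorted ut"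
    unfolding sorted_iff_nth_mono lut
    using sorted_nth_mono[OF lu(2)] utn pL st lu(1) by auto
  define a where "a = ut!0"
  define b where "b = ut!(L-1)"
  have utab: "a \<le> ut!j \<and> ut!j \<le> b" if "j < L" for j
    using sorted_nth_mono[OF sut, of 0 j] sorted_nth_mono[OF sut, of j "L-1"] that lut L1
    unfolding a_def b_def by auto
  have ab: "a \<le> b" using utab[of 0] L1 by auto
  have utb: "set ut \<subseteq> {a..b}" using utab lut by (auto simp: in_set_conv_nth)
  have ua: "a = u!p" and ub: "b = u!(t-1)" using L1 pL unfolding a_def b_def by (auto simp: utn)
  have uopt': "sqdist ut z \<le> sqdist v z" if v: "length v = L" "sorted v" "set v \<subseteq> {a..b}" for v
  proof -
    have vab: "a \<le> v!j \<and> v!j \<le> b" if "j < L" for j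
    proof -
      have "v!j \<in> set v" using v(1) that by simp
      thus ?thesis using v(3) by auto
    qed
    define u' where "u' = map (\<lambda>i. if p \<le> i \<and> i < p + L then v!(i - p) else u!i) [0..<n]"
    have lu': "length u' = n" by (simp add: u'_def)
    have su': "sorted u'"
    proof (subst sorted_iff_nth_mono, intro allI impI)
      fix i i' assume ii: "i \<le> i'" "i' < length u'"
      hence i'n: "i' < n" by (simp add: lu')
      show "u'!i \<le> u'!i'"
      proof (cases "p \<le> i \<and> i < p + L")
        case True note iT = True
        show ?thesis
        proof (cases "p \<le> i' \<and> i' < p + L")
          case True
          thus ?thesis using iT ii i'n sorted_nth_mono[OF v(2), of "i - p" "i' - p"] v(1)
            by (simp add: u'_def)
        next
          case False
          hence "t \<le> i'" using iT ii pL by auto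
          hence "u!(t-1) \<le> u!i'" using sorted_nth_mono[OF lu(2), of "t-1" i'] i'n lu(1) by auto
          moreover have "v!(i-p) \<le> b" using vab[of "i-p"] iT by auto
          ultimately show ?thesis using iT False i'n ii ub by (simp add: u'_def)
        qed
      next
        case False note iF = False
        show ?thesis
        proof (cases "p \<le> i' \<and> i' < p + L")
          case True
          hence "i < p" using iF ii by auto
          hence "u!i \<le> u!p" using sorted_nth_mono[OF lu(2), of i p] pL st lu(1) L1 by auto
          moreover have "a \<le> v!(i'-p)" using vab[of "i'-p"] True by auto
          ultimately show ?thesis using iF True i'n ii ua by (simp add: u'_def)
        next
          case False
          thus ?thesis using iF ii i'n sorted_nth_mono[OF lu(2), of i i'] lu(1) by (auto simp add: u'_def)
        qed
      qed
    qed
    have "u' \<in> mono_cone n" using lu' su' by (simp add: mono_cone_def)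
    hence le: "sqdist u y \<le> sqdist u' y" using uopt by blast
    have pLn: "p + L \<le> n" using pL st by simp
    define Oo where "Oo = (\<Sum>i\<in>{..<n} - {p..<p+L}. (u!i - y!i)^2)"
    have "sqdist u y = Oo + (\<Sum>j<L. (u!(p+j) - y!(p+j))^2)"
      unfolding Oo_def sqdist_nth[OF lu(1) ly] by (rule sum_split_block[OF pLn])
    also have "(\<Sum>j<L. (u!(p+j) - y!(p+j))^2) = sqdist ut z"
      unfolding sqdist_nth[OF lut lz] by (rule sum.cong) (auto simp: utn zn)
    finally have e1: "sqdist u y = Oo + sqdist ut z" .
    have "sqdist u' y = (\<Sum>i\<in>{..<n} - {p..<p+L}. (u'!i - y!i)^2) + (\<Sum>j<L. (u'!(p+j) - y!(p+j))^2)"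
      unfolding sqdist_nth[OF lu' ly] by (rule sum_split_block[OF pLn])
    also have "(\<Sum>i\<in>{..<n} - {p..<p+L}. (u'!i - y!i)^2) = Oo"
      unfolding Oo_def by (rule sum.cong) (auto simp: u'_def)
    also have "(\<Sum>j<L. (u'!(p+j) - y!(p+j))^2) = sqdist v z"
      unfolding sqdist_nth[OF v(1) lz] by (rule sum.cong) (use pLn in \<open>auto simp: u'_def zn\<close>)
    finally have e2: "sqdist u' y = Oo + sqdist v z" .
    show ?thesis using le e1 e2 by simp
  qed
  have cardL: "card {s..t} = L" by (simp add: L_def)
  define w where "w = proj (mono_cone L) z"
  have w: "w \<in> mono_cone L" "\<forall>v\<in>mono_cone L. sqdist w z \<le> sqdist v z"
    using proj_char[OF lz] unfolding w_def by auto
  have "ut = map (clip a b) w"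
    by (rule block_clip[OF lz w(1) w(2) ab lut sut utb uopt'])
  hence "kdist ut \<le> kdist w" unfolding kdist_def by (simp add: card_image_le)
  thus ?thesis unfolding ut_def w_def z_def cardL .
qed


theorem mainTheorem5:
  fixes n m :: nat and y :: "real list" and T :: "nat \<Rightarrow> nat set"
  assumes "n \<ge> 1" and "length y = n"
    and "\<forall>j<m. \<exists>s t. s \<le> t \<and> T j = {s..t}"
    and "\<forall>i<m. \<forall>j<m. i \<noteq> j \<longrightarrow> T i \<inter> T j = {}"
    and "(\<Union>j<m. T j) = {1..n}"
  shows "kdist (proj (mono_cone n) y)
           \<le> (\<Sum>j<m. kdist (proj (mono_cone (card (T j))) (subvec y (T j))))"
proof -
  define u where "u = proj (mono_cone n) y"
  have u: "u \<in> mono_cone n" "\<forall>v\<in>mono_cone n. sqdist u y \<le> sqdist v y"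
    using proj_char[OF assms(2)] unfolding u_def by auto
  have lu: "length u = n" using u by (simp add: mono_cone_def)
  define f where "f = (\<lambda>i. u!(i - 1))"
  have fin: "finite (T j)" if "j < m" for j using assms(3) that by auto
  have setu: "set u = f ` {1..n}"
  proof -
    have "set u = (\<lambda>i. u!i) ` {..<n}" using lu by (auto simp: in_set_conv_nth)
    also have "\<dots> = f ` {1..n}" unfolding f_def
    proof (intro equalityI subsetI)
      fix x assume "x \<in> (\<lambda>i. u!i) ` {..<n}"
      then obtain i where "i < n" "x = u!i" by auto
      thus "x \<in> (\<lambda>i. u!(i - 1)) ` {1..n}" by (intro image_eqI[of _ _ "Suc i"]) auto
    qed auto
    finally show ?thesis .
  qed
  have setT: "set (subvec u (T j)) = f ` T j" if "j < m" for j
    unfolding subvec_def f_def using fin[OF that] by simp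
  have "kdist u = card (\<Union>j<m. f ` T j)"
    unfolding kdist_def setu assms(5)[symmetric] by (simp add: image_UN)
  also have "\<dots> \<le> (\<Sum>j<m. card (f ` T j))" by (rule card_UN_le) simp
  also have "\<dots> \<le> (\<Sum>j<m. kdist (proj (mono_cone (card (T j))) (subvec y (T j))))"
  proof (rule sum_mono)
    fix j assume "j \<in> {..<m}"
    hence j: "j < m" by simp
    obtain s t where st: "s \<le> t" "T j = {s..t}" using assms(3) j by blast
    have "T j \<subseteq> {1..n}" using assms(5) j by blast
    hence st2: "1 \<le> s" "t \<le> n" using st by auto
    have "card (f ` T j) = kdist (subvec u (T j))" unfolding kdist_def setT[OF j] ..
    also have "\<dots> \<le> kdist (proj (mono_cone (card (T j))) (subvec y (T j)))"
      unfolding st(2) by (rule block_bound[OF assms(2) u(1) u(2) st2(1) st(1) st2(2)])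
    finally show "card (f ` T j) \<le> kdist (proj (mono_cone (card (T j))) (subvec y (T j)))" .
  qed
  finally show ?thesis unfolding u_def .
qed

end
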